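(* Let $F,G$ be complete posheaves on a locale $X$ and $\alpha:F\to G$ an order-preserving morphism. The following are equivalent: (1) $\alpha$ is sup-preserving, i.e. $sup_G\circ\alpha_*=\alpha\circ sup_F$ as morphisms $\mathbb{P}F\to G$. (2) For each $u\in\mathcal{O}(X)$, $\alpha_u:F(u)\to G(u)$ preserves arbitrary joins, and for all $v\le u$ in $\mathcal{O}(X)$ we have $\alpha_u\circ f_{v,u}=g_{v,u}\circ\alpha_v$, where $f_{v,u}:F(v)\to F(u)$ and $g_{v,u}:G(v)\to G(u)$ are the left adjoints of the restriction maps $F(u)\to F(v)$ and $G(u)\to G(v)$. (3) $\alpha$ has a right adjoint, i.e. there is an order-preserving $\beta:G\to F$ with $\alpha\dashv\beta$.
   Context: Let $X$ be a locale with frame of opens $\mathcal{O}(X)$. A posheaf on $X$ is a sheaf of sets $F$ with (POS1) each $F(u)$ a poset; (POS2) restriction maps $F(u)\to F(v)$, $x\mapsto x|_v$ ($v\le u$), order-preserving; (POS3) if $u=\bigvee_i u_i$ and $s,t\in F(u)$ satisfy $s|_{u_i}\le t|_{u_i}$ for all $i$, then $s\le t$. Points of $F$ are elements $x\in F(u)$ (for varying $u$), ordered by $x\le y$ ($x\in F(u)$, $y\in F(w)$) iff $u\le w$ and $x\le y|_u$. A morphism of posheaves is order-preserving if it preserves this order; $\alpha\dashv\beta$ means $\alpha x\le y\iff x\le\beta y$ for all points. A posheaf $F$ is complete iff every $F(u)$ is a complete lattice and every restriction map $F(u)\to F(v)$ ($v\le u$) is surjective and has both a left and a right adjoint (equivalently,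 the principal ideal embedding into the sheaf of downsheaves has a left adjoint). $\mathbb{P}F$ is the sheaf with $\mathbb{P}F(u)$ the set of subsheaves of $F^u$ (the restriction of $F$ to $\downarrow u$), ordered by inclusion, with restriction $S\mapsto S^v$. For complete $F$, $sup_F:\mathbb{P}F\to F$ sends $S\in\mathbb{P}F(u)$ to the least $z\in F(u)$ such that $S(v)\subseteq\{y\in F(v)\mid y\le z|_v\}$ for all $v\le u$ (this is the left adjoint of the principal ideal embedding $F\to\mathbb{P}F$). For $\alpha:F\to G$, $\alpha_*:\mathbb{P}F\to\mathbb{P}G$ sends $S\in\mathbb{P}F(u)$ to the subsheaf of $G^u$ generated by the presheaf $v\mapsto\alpha_v(S(v))$. *)

theory Defs
  imports Main
begin

text \<open>The locale X is given by its frame of opens, a complete lattice 'o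
satisfying the frame distributive law (assumed explicitly in the theorem).
A posheaf is represented by its sections over each open (subsets of a
fixed carrier type), restriction maps res u v (from F(u) to F(v), v \<le> u),
and the partial order on each F(u).\<close>

record ('o, 'a) posheaf =
  sec :: "'o \<Rightarrow> 'a set"
  res :: "'o \<Rightarrow> 'o \<Rightarrow> 'a \<Rightarrow> 'a"
  ord :: "'o \<Rightarrow> 'a \<Rightarrow> 'a \<Rightarrow> bool"

definition frame_law :: "'o::complete_lattice itself \<Rightarrow> bool" where
  "frame_law _ \<longleftrightarrow> (\<forall>(a::'o) S. inf a (Sup S) = (SUP b\<in>S. inf a b))"

definition is_sheaf :: "('o::complete_lattice, 'a, 'c) posheaf_scheme \<Rightarrow> bool" where
  "is_sheaf F \<longleftrightarrow>
     (\<forall>u v x. v \<le> u \<longrightarrow> x \<in> sec F u \<longrightarrow> res F u v x \<in> sec F v) \<and>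
     (\<forall>u x. x \<in> sec F u \<longrightarrow> res F u u x = x) \<and>
     (\<forall>u v w x. w \<le> v \<longrightarrow> v \<le> u \<longrightarrow> x \<in> sec F u \<longrightarrow>
        res F v w (res F u v x) = res F u w x) \<and>
     (\<forall>U x y. x \<in> sec F (Sup U) \<longrightarrow> y \<in> sec F (Sup U) \<longrightarrow>
        (\<forall>w\<in>U. res F (Sup U) w x = res F (Sup U) w y) \<longrightarrow> x = y) \<and>
     (\<forall>U s. (\<forall>w\<in>U. s w \<in> sec F w) \<longrightarrow>
        (\<forall>w\<in>U. \<forall>w'\<in>U. res F w (inf w w') (s w) = res F w' (inf w w') (s w')) \<longrightarrow>
        (\<exists>x\<in>sec F (Sup U). \<forall>w\<in>U. res F (Sup U) w x = s w))"

definition is_posheaf :: "('o::complete_lattice, 'a, 'c) posheaf_scheme \<Rightarrow> bool" where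
  "is_posheaf F \<longleftrightarrow> is_sheaf F \<and>
     \<comment> \<open>POS1\<close>
     (\<forall>u. (\<forall>x\<in>sec F u. ord F u x x) \<and>
          (\<forall>x\<in>sec F u. \<forall>y\<in>sec F u. ord F u x y \<longrightarrow> ord F u y x \<longrightarrow> x = y) \<and>
          (\<forall>x\<in>sec F u. \<forall>y\<in>sec F u. \<forall>z\<in>sec F u. ord F u x y \<longrightarrow> ord F u y z \<longrightarrow> ord F u x z)) \<and>
     \<comment> \<open>POS2\<close>
     (\<forall>u v x y. v \<le> u \<longrightarrow> x \<in> sec F u \<longrightarrow> y \<in> sec F u \<longrightarrow> ord F u x y \<longrightarrow>
        ord F v (res F u v x) (res F u v y)) \<and>
     \<comment> \<open>POS3\<close>
     (\<forall>U s t. s \<in> sec F (Sup U) \<longrightarrow> t \<in> sec F (Sup U) \<longrightarrow>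
        (\<forall>w\<in>U. ord F w (res F (Sup U) w s) (res F (Sup U) w t)) \<longrightarrow> ord F (Sup U) s t)"

definition is_lub :: "('o, 'a, 'c) posheaf_scheme \<Rightarrow> 'o \<Rightarrow> 'a set \<Rightarrow> 'a \<Rightarrow> bool" where
  "is_lub F u A z \<longleftrightarrow> z \<in> sec F u \<and> (\<forall>a\<in>A. ord F u a z) \<and>
     (\<forall>z'\<in>sec F u. (\<forall>a\<in>A. ord F u a z') \<longrightarrow> ord F u z z')"

definition is_left_adj_res :: "('o, 'a, 'c) posheaf_scheme \<Rightarrow> 'o \<Rightarrow> 'o \<Rightarrow> ('a \<Rightarrow> 'a) \<Rightarrow> bool" where
  "is_left_adj_res F u v f \<longleftrightarrow> (\<forall>y\<in>sec F v. f y \<in> sec F u) \<and>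
     (\<forall>y\<in>sec F v. \<forall>x\<in>sec F u. ord F u (f y) x \<longleftrightarrow> ord F v y (res F u v x))"

definition is_right_adj_res :: "('o, 'a, 'c) posheaf_scheme \<Rightarrow> 'o \<Rightarrow> 'o \<Rightarrow> ('a \<Rightarrow> 'a) \<Rightarrow> bool" where
  "is_right_adj_res F u v g \<longleftrightarrow> (\<forall>y\<in>sec F v. g y \<in> sec F u) \<and>
     (\<forall>y\<in>sec F v. \<forall>x\<in>sec F u. ord F v (res F u v x) y \<longleftrightarrow> ord F u x (g y))"

definition complete_posheaf :: "('o::complete_lattice, 'a, 'c) posheaf_scheme \<Rightarrow> bool" where
  "complete_posheaf F \<longleftrightarrow> is_posheaf F \<and>
     (\<forall>u A. A \<subseteq> sec F u \<longrightarrow> (\<exists>z. is_lub F u A z)) \<and>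
     (\<forall>u v. v \<le> u \<longrightarrow>
        res F u v ` sec F u = sec F v \<and>
        (\<exists>f. is_left_adj_res F u v f) \<and> (\<exists>g. is_right_adj_res F u v g))"

definition res_ladj :: "('o, 'a, 'c) posheaf_scheme \<Rightarrow> 'o \<Rightarrow> 'o \<Rightarrow> 'a \<Rightarrow> 'a" where
  "res_ladj F v u y = (THE x. x \<in> sec F u \<and>
      (\<forall>x'\<in>sec F u. ord F u x x' \<longleftrightarrow> ord F v y (res F u v x')))"

definition is_morphism :: "('o::complete_lattice, 'a, 'c) posheaf_scheme \<Rightarrow> ('o, 'b, 'd) posheaf_scheme
    \<Rightarrow> ('o \<Rightarrow> 'a \<Rightarrow> 'b) \<Rightarrow> bool" where
  "is_morphism F G \<alpha> \<longleftrightarrow> (\<forall>u x. x \<in> sec F u \<longrightarrow> \<alpha> u x \<in> sec G u) \<and>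
     (\<forall>u v x. v \<le> u \<longrightarrow> x \<in> sec F u \<longrightarrow> \<alpha> v (res F u v x) = res G u v (\<alpha> u x))"

definition pt_le :: "('o::complete_lattice, 'a, 'c) posheaf_scheme \<Rightarrow> 'o \<Rightarrow> 'a \<Rightarrow> 'o \<Rightarrow> 'a \<Rightarrow> bool" where
  "pt_le F u x w y \<longleftrightarrow> u \<le> w \<and> ord F u x (res F w u y)"

definition order_preserving :: "('o::complete_lattice, 'a, 'c) posheaf_scheme \<Rightarrow> ('o, 'b, 'd) posheaf_scheme
    \<Rightarrow> ('o \<Rightarrow> 'a \<Rightarrow> 'b) \<Rightarrow> bool" where
  "order_preserving F G \<alpha> \<longleftrightarrow> (\<forall>u w x y. x \<in> sec F u \<longrightarrow> y \<in> sec F w \<longrightarrow>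
      pt_le F u x w y \<longrightarrow> pt_le G u (\<alpha> u x) w (\<alpha> w y))"

definition adjoint :: "('o::complete_lattice, 'a, 'c) posheaf_scheme \<Rightarrow> ('o, 'b, 'd) posheaf_scheme
    \<Rightarrow> ('o \<Rightarrow> 'a \<Rightarrow> 'b) \<Rightarrow> ('o \<Rightarrow> 'b \<Rightarrow> 'a) \<Rightarrow> bool" where
  "adjoint F G \<alpha> \<beta> \<longleftrightarrow> (\<forall>u w x y. x \<in> sec F u \<longrightarrow> y \<in> sec G w \<longrightarrow>
      (pt_le G u (\<alpha> u x) w y \<longleftrightarrow> pt_le F u x w (\<beta> w y)))"

text \<open>Subsheaves of F^u (F restricted to the down-set of u); the value on opens
not below u is empty by convention. These are the elements of \<bbbP>F(u).\<close>
definition is_subsheaf :: "('o::complete_lattice, 'a, 'c) posheaf_scheme \<Rightarrow> 'o \<Rightarrow> ('o \<Rightarrow> 'a set) \<Rightarrow> bool" where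
  "is_subsheaf F u T \<longleftrightarrow>
     (\<forall>v. \<not> v \<le> u \<longrightarrow> T v = {}) \<and>
     (\<forall>v. v \<le> u \<longrightarrow> T v \<subseteq> sec F v) \<and>
     (\<forall>v w x. v \<le> u \<longrightarrow> w \<le> v \<longrightarrow> x \<in> T v \<longrightarrow> res F v w x \<in> T w) \<and>
     (\<forall>V x. Sup V \<le> u \<longrightarrow> x \<in> sec F (Sup V) \<longrightarrow>
        (\<forall>w\<in>V. res F (Sup V) w x \<in> T w) \<longrightarrow> x \<in> T (Sup V))"

definition psup :: "('o::complete_lattice, 'a, 'c) posheaf_scheme \<Rightarrow> 'o \<Rightarrow> ('o \<Rightarrow> 'a set) \<Rightarrow> 'a" where
  "psup F u S = (THE z. z \<in> sec F u \<and>
      (\<forall>v. v \<le> u \<longrightarrow> (\<forall>y\<in>S v. ord F v y (res F u v z))) \<and>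
      (\<forall>z'\<in>sec F u. (\<forall>v. v \<le> u \<longrightarrow> (\<forall>y\<in>S v. ord F v y (res F u v z'))) \<longrightarrow> ord F u z z'))"

definition gen_subsheaf :: "('o::complete_lattice, 'b, 'd) posheaf_scheme \<Rightarrow> 'o \<Rightarrow> ('o \<Rightarrow> 'b set) \<Rightarrow> ('o \<Rightarrow> 'b set)" where
  "gen_subsheaf G u P = (\<lambda>v. \<Inter>{T v | T. is_subsheaf G u T \<and> (\<forall>w. P w \<subseteq> T w)})"

definition push :: "('o::complete_lattice, 'b, 'd) posheaf_scheme \<Rightarrow> ('o \<Rightarrow> 'a \<Rightarrow> 'b) \<Rightarrow> 'o \<Rightarrow> ('o \<Rightarrow> 'a set) \<Rightarrow> ('o \<Rightarrow> 'b set)" where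
  "push G \<alpha> u S = gen_subsheaf G u (\<lambda>v. \<alpha> v ` S v)"

end

theory Submission
  imports Defs
begin


lemma ps_sheaf: "is_posheaf F \<Longrightarrow> is_sheaf F" unfolding is_posheaf_def by (rule conjunct1)
lemma ps_res_sec: "is_posheaf F \<Longrightarrow> v \<le> u \<Longrightarrow> x \<in> sec F u \<Longrightarrow> res F u v x \<in> sec F v"
  by (drule ps_sheaf, unfold is_sheaf_def, drule conjunct1) blast
lemma ps_res_id: "is_posheaf F \<Longrightarrow> x \<in> sec F u \<Longrightarrow> res F u u x = x"
  by (drule ps_sheaf, unfold is_sheaf_def, drule conjunct2, drule conjunct1) blast
lemma ps_res_comp: "is_posheaf F \<Longrightarrow> w \<le> v \<Longrightarrow> v \<le> u \<Longrightarrow> x \<in> sec F u \<Longrightarrow> res F v w (res F u v x) = res F u w x"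
  by (drule ps_sheaf, unfold is_sheaf_def, drule conjunct2, drule conjunct2, drule conjunct1) blast
lemma ps_pos1: "is_posheaf F \<Longrightarrow> (\<forall>x\<in>sec F u. ord F u x x) \<and>
          (\<forall>x\<in>sec F u. \<forall>y\<in>sec F u. ord F u x y \<longrightarrow> ord F u y x \<longrightarrow> x = y) \<and>
          (\<forall>x\<in>sec F u. \<forall>y\<in>sec F u. \<forall>z\<in>sec F u. ord F u x y \<longrightarrow> ord F u y z \<longrightarrow> ord F u x z)"
  unfolding is_posheaf_def by (drule conjunct2, drule conjunct1) (erule spec)
lemma ps_refl: "is_posheaf F \<Longrightarrow> x \<in> sec F u \<Longrightarrow> ord F u x x"
  by (drule ps_pos1) blast
lemma ps_antisym: "is_posheaf F \<Longrightarrow> x \<in> sec F u \<Longrightarrow> y \<in> sec F u \<Longrightarrow> ord F u x y \<Longrightarrow> ord F u y x \<Longrightarrow> x = y"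
  by (drule ps_pos1) blast
lemma ps_trans: "is_posheaf F \<Longrightarrow> x \<in> sec F u \<Longrightarrow> y \<in> sec F u \<Longrightarrow> z \<in> sec F u \<Longrightarrow> ord F u x y \<Longrightarrow> ord F u y z \<Longrightarrow> ord F u x z"
  by (drule ps_pos1) blast
lemma ps_res_mono: "is_posheaf F \<Longrightarrow> v \<le> u \<Longrightarrow> x \<in> sec F u \<Longrightarrow> y \<in> sec F u \<Longrightarrow> ord F u x y \<Longrightarrow> ord F v (res F u v x) (res F u v y)"
  unfolding is_posheaf_def by (drule conjunct2, drule conjunct2, drule conjunct1) blast
lemma ps_pos3: "is_posheaf F \<Longrightarrow> s \<in> sec F (Sup U) \<Longrightarrow> t \<in> sec F (Sup U) \<Longrightarrow>
   (\<And>w. w \<in> U \<Longrightarrow> ord F w (res F (Sup U) w s) (res F (Sup U) w t)) \<Longrightarrow> ord F (Sup U) s t"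
  unfolding is_posheaf_def by (drule conjunct2, drule conjunct2, drule conjunct2) blast

lemma cp_ps: "complete_posheaf F \<Longrightarrow> is_posheaf F"
  unfolding complete_posheaf_def by blast
lemma cp_lub: "complete_posheaf F \<Longrightarrow> A \<subseteq> sec F u \<Longrightarrow> \<exists>z. is_lub F u A z"
  unfolding complete_posheaf_def by blast
lemma cp_ladj: "complete_posheaf F \<Longrightarrow> v \<le> u \<Longrightarrow> \<exists>f. is_left_adj_res F u v f"
  unfolding complete_posheaf_def by blast

lemma mor_sec: "is_morphism F G \<alpha> \<Longrightarrow> x \<in> sec F u \<Longrightarrow> \<alpha> u x \<in> sec G u"
  unfolding is_morphism_def by blast
lemma mor_nat: "is_morphism F G \<alpha> \<Longrightarrow> v \<le> u \<Longrightarrow> x \<in> sec F u \<Longrightarrow> \<alpha> v (res F u v x) = res G u v (\<alpha> u x)"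
  unfolding is_morphism_def by blast

lemma id_mor: "is_posheaf F \<Longrightarrow> is_morphism F F (\<lambda>v y. y)"
  unfolding is_morphism_def by (auto intro: ps_res_sec)

lemma lub_unique: "is_posheaf F \<Longrightarrow> is_lub F u A z1 \<Longrightarrow> is_lub F u A z2 \<Longrightarrow> z1 = z2"
  unfolding is_lub_def by (meson ps_antisym)

lemma lub_char: "is_posheaf F \<Longrightarrow> is_lub F u A z \<Longrightarrow> A \<subseteq> sec F u \<Longrightarrow> z' \<in> sec F u \<Longrightarrow>
   ord F u z z' \<longleftrightarrow> (\<forall>a\<in>A. ord F u a z')"
  unfolding is_lub_def by (meson ps_trans subsetD)

lemma the_char:
  assumes "is_posheaf F" "e \<in> sec F u" "\<forall>x\<in>sec F u. ord F u e x \<longleftrightarrow> R x"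
  shows "(THE x. x \<in> sec F u \<and> (\<forall>x'\<in>sec F u. ord F u x x' \<longleftrightarrow> R x')) = e"
proof (rule the_equality)
  show "e \<in> sec F u \<and> (\<forall>x'\<in>sec F u. ord F u e x' = R x')" using assms by blast
next
  fix x assume x: "x \<in> sec F u \<and> (\<forall>x'\<in>sec F u. ord F u x x' = R x')"
  have "ord F u x e" using x assms ps_refl[OF assms(1)] by blast
  moreover have "ord F u e x" using x assms ps_refl[OF assms(1)] by blast
  ultimately show "x = e" using ps_antisym[OF assms(1)] x assms(2) by blast
qed

lemma ladj_char:
  assumes "complete_posheaf F" "v \<le> u" "y \<in> sec F v"
  shows "res_ladj F v u y \<in> sec F u \<and> (\<forall>x\<in>sec F u. ord F u (res_ladj F v u y) x \<longleftrightarrow> ord F v y (res F u v x))"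
proof -
  obtain f where f: "is_left_adj_res F u v f" using cp_ladj assms by blast
  have e: "f y \<in> sec F u" "\<forall>x\<in>sec F u. ord F u (f y) x \<longleftrightarrow> ord F v y (res F u v x)"
    using f assms(3) unfolding is_left_adj_res_def by auto
  have "res_ladj F v u y = f y" unfolding res_ladj_def
    by (rule the_char[OF cp_ps[OF assms(1)] e])
  thus ?thesis using e by simp
qed

definition ub where "ub F u S z \<longleftrightarrow> (\<forall>v. v \<le> u \<longrightarrow> (\<forall>y\<in>S v. ord F v y (res F u v z)))"

lemma psup_eq:
  assumes "is_posheaf F" "e \<in> sec F u" "\<forall>x\<in>sec F u. ord F u e x \<longleftrightarrow> ub F u S x"
  shows "psup F u S = e"
  unfolding psup_def ub_def[symmetric]
proof (rule the_equality)
  show "e \<in> sec F u \<and> ub F u S e \<and> (\<forall>z'\<in>sec F u. ub F u S z' \<longrightarrow> ord F u e z')"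
    using assms ps_refl[OF assms(1)] by blast
next
  fix z assume z: "z \<in> sec F u \<and> ub F u S z \<and> (\<forall>z'\<in>sec F u. ub F u S z' \<longrightarrow> ord F u z z')"
  have "ord F u z e" using z assms ps_refl[OF assms(1)] by blast
  moreover have "ord F u e z" using z assms by blast
  ultimately show "z = e" using ps_antisym[OF assms(1)] z assms(2) by blast
qed

lemma psup_exists:
  assumes cF: "complete_posheaf F" and S: "\<forall>v. v \<le> u \<longrightarrow> S v \<subseteq> sec F v"
  shows "\<exists>z\<in>sec F u. \<forall>x\<in>sec F u. ord F u z x \<longleftrightarrow> ub F u S x"
proof -
  have F: "is_posheaf F" using cF by (rule cp_ps)
  define E where "E = {e. \<exists>w y. w \<le> u \<and> y \<in> S w \<and> e = res_ladj F w u y}"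
  have ES: "E \<subseteq> sec F u" unfolding E_def using ladj_char[OF cF] S by blast
  obtain z where z: "is_lub F u E z" using cp_lub[OF cF ES] by blast
  have zs: "z \<in> sec F u" using z unfolding is_lub_def by blast
  have "\<forall>x\<in>sec F u. ord F u z x \<longleftrightarrow> ub F u S x"
  proof
    fix x assume x: "x \<in> sec F u"
    have "ord F u z x \<longleftrightarrow> (\<forall>a\<in>E. ord F u a x)" by (rule lub_char[OF F z ES x])
    also have "\<dots> \<longleftrightarrow> ub F u S x"
      unfolding E_def ub_def using ladj_char[OF cF] S x by blast
    finally show "ord F u z x \<longleftrightarrow> ub F u S x" .
  qed
  thus ?thesis using zs by blast
qed



lemma top_subsheaf: "is_posheaf F \<Longrightarrow> is_subsheaf F u (\<lambda>v. if v \<le> u then sec F v else {})"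
  unfolding is_subsheaf_def by (auto intro: ps_res_sec order_trans)

lemma gen_props:
  assumes F: "is_posheaf F" and P0: "\<forall>v. \<not> v \<le> u \<longrightarrow> P v = {}" and Ps: "\<forall>v. v \<le> u \<longrightarrow> P v \<subseteq> sec F v"
  shows "is_subsheaf F u (gen_subsheaf F u P)" "\<forall>v. P v \<subseteq> gen_subsheaf F u P v"
    "\<And>T v. is_subsheaf F u T \<Longrightarrow> (\<forall>w. P w \<subseteq> T w) \<Longrightarrow> gen_subsheaf F u P v \<subseteq> T v"
proof -
  let ?top = "\<lambda>v. if v \<le> u then sec F v else {}"
  have top: "is_subsheaf F u ?top" using top_subsheaf[OF F] .
  have Ptop: "\<forall>w. P w \<subseteq> ?top w" using P0 Ps by auto
  show sub: "\<And>T v. is_subsheaf F u T \<Longrightarrow> (\<forall>w. P w \<subseteq> T w) \<Longrightarrow> gen_subsheaf F u P v \<subseteq> T v"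
    unfolding gen_subsheaf_def by blast
  show "\<forall>v. P v \<subseteq> gen_subsheaf F u P v" unfolding gen_subsheaf_def by blast
  have mem: "x \<in> gen_subsheaf F u P v \<longleftrightarrow> (\<forall>T. is_subsheaf F u T \<and> (\<forall>w. P w \<subseteq> T w) \<longrightarrow> x \<in> T v)" for x v
    unfolding gen_subsheaf_def by blast
  show "is_subsheaf F u (gen_subsheaf F u P)"
    unfolding is_subsheaf_def
  proof (intro conjI allI impI subsetI)
    fix v x assume "\<not> v \<le> u" 
    then show "gen_subsheaf F u P v = {}" using sub[OF top Ptop, of v] by auto
  next
    fix v x assume "v \<le> u" "x \<in> gen_subsheaf F u P v"
    then show "x \<in> sec F v" using sub[OF top Ptop, of v] by auto
  next
    fix v w x assume h: "v \<le> u" "w \<le> v" "x \<in> gen_subsheaf F u P v"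
    show "res F v w x \<in> gen_subsheaf F u P w"
      unfolding mem
    proof (intro allI impI)
      fix T assume T: "is_subsheaf F u T \<and> (\<forall>w. P w \<subseteq> T w)"
      then have "x \<in> T v" using h mem by blast
      then show "res F v w x \<in> T w" using T h unfolding is_subsheaf_def by blast
    qed
  next
    fix V x assume h: "Sup V \<le> u" "x \<in> sec F (Sup V)" "\<forall>w\<in>V. res F (Sup V) w x \<in> gen_subsheaf F u P w"
    show "x \<in> gen_subsheaf F u P (Sup V)"
      unfolding mem
    proof (intro allI impI)
      fix T assume T: "is_subsheaf F u T \<and> (\<forall>w. P w \<subseteq> T w)"
      then have "\<forall>w\<in>V. res F (Sup V) w x \<in> T w" using h mem by blast
      then show "x \<in> T (Sup V)" using T h unfolding is_subsheaf_def by blast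
    qed
  qed
qed

lemma gen_ub:
  assumes F: "is_posheaf F" and G: "is_posheaf G" and mor: "is_morphism F G \<alpha>"
    and P0: "\<forall>v. \<not> v \<le> u \<longrightarrow> P v = {}" and Ps: "\<forall>v. v \<le> u \<longrightarrow> P v \<subseteq> sec F v"
    and z: "z \<in> sec G u"
  shows "ub G u (\<lambda>v. \<alpha> v ` gen_subsheaf F u P v) z \<longleftrightarrow> ub G u (\<lambda>v. \<alpha> v ` P v) z"
proof
  assume "ub G u (\<lambda>v. \<alpha> v ` gen_subsheaf F u P v) z"
  then show "ub G u (\<lambda>v. \<alpha> v ` P v) z" using gen_props(2)[OF F P0 Ps] unfolding ub_def by blast
next
  assume ubP: "ub G u (\<lambda>v. \<alpha> v ` P v) z"
  define T where "T = (\<lambda>v. if v \<le> u then {y \<in> sec F v. ord G v (\<alpha> v y) (res G u v z)} else {})"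
  have T: "is_subsheaf F u T"
    unfolding is_subsheaf_def
  proof (intro conjI allI impI subsetI)
    fix v assume "\<not> v \<le> u" then show "T v = {}" unfolding T_def by simp
  next
    fix v x assume "v \<le> u" "x \<in> T v" then show "x \<in> sec F v" unfolding T_def by simp
  next
    fix v w x assume h: "v \<le> u" "w \<le> v" "x \<in> T v"
    have wu: "w \<le> u" using h(1,2) by (rule order_trans[rotated])
    have x: "x \<in> sec F v" "ord G v (\<alpha> v x) (res G u v z)" using h unfolding T_def by auto
    have "ord G w (res G v w (\<alpha> v x)) (res G v w (res G u v z))"
      using ps_res_mono[OF G h(2) mor_sec[OF mor x(1)] ps_res_sec[OF G h(1) z] x(2)] .
    then have "ord G w (\<alpha> w (res F v w x)) (res G u w z)"
      using mor_nat[OF mor h(2) x(1)] ps_res_comp[OF G h(2) h(1) z] by simp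
    then show "res F v w x \<in> T w" unfolding T_def using wu ps_res_sec[OF F h(2) x(1)] by simp
  next
    fix V x assume h: "Sup V \<le> u" "x \<in> sec F (Sup V)" "\<forall>w\<in>V. res F (Sup V) w x \<in> T w"
    have "ord G (Sup V) (\<alpha> (Sup V) x) (res G u (Sup V) z)"
    proof (rule ps_pos3[OF G mor_sec[OF mor h(2)] ps_res_sec[OF G h(1) z]])
      fix w assume w: "w \<in> V"
      have wV: "w \<le> Sup V" using w by (rule Sup_upper)
      have wu: "w \<le> u" using wV h(1) by (rule order_trans)
      have "ord G w (\<alpha> w (res F (Sup V) w x)) (res G u w z)" using h(3) w wu unfolding T_def by auto
      then show "ord G w (res G (Sup V) w (\<alpha> (Sup V) x)) (res G (Sup V) w (res G u (Sup V) z))"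
        using mor_nat[OF mor wV h(2)] ps_res_comp[OF G wV h(1) z] by simp
    qed
    then show "x \<in> T (Sup V)" unfolding T_def using h by simp
  qed
  have PT: "\<forall>w. P w \<subseteq> T w"
  proof (intro allI subsetI)
    fix w y assume y: "y \<in> P w"
    then have wu: "w \<le> u" using P0 by blast
    then show "y \<in> T w" using y ubP Ps unfolding ub_def T_def by auto
  qed
  show "ub G u (\<lambda>v. \<alpha> v ` gen_subsheaf F u P v) z"
    unfolding ub_def
  proof (intro allI impI ballI)
    fix v y assume v: "v \<le> u" and y: "y \<in> \<alpha> v ` gen_subsheaf F u P v"
    then obtain x where x: "x \<in> gen_subsheaf F u P v" "y = \<alpha> v x" by blast
    then have "x \<in> T v" using gen_props(3)[OF F P0 Ps T PT] by blast
    then show "ord G v y (res G u v z)" using x v unfolding T_def by simp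
  qed
qed

lemma ub_push:
  assumes F: "is_posheaf F" and G: "is_posheaf G" and mor: "is_morphism F G \<alpha>"
    and S: "is_subsheaf F u S" and z: "z \<in> sec G u"
  shows "ub G u (push G \<alpha> u S) z \<longleftrightarrow> ub G u (\<lambda>v. \<alpha> v ` S v) z"
proof -
  have P0: "\<forall>v. \<not> v \<le> u \<longrightarrow> (\<lambda>v. \<alpha> v ` S v) v = {}" using S unfolding is_subsheaf_def by simp
  have Ps: "\<forall>v. v \<le> u \<longrightarrow> (\<lambda>v. \<alpha> v ` S v) v \<subseteq> sec G v"
    using S mor_sec[OF mor] unfolding is_subsheaf_def by blast
  have "ub G u (\<lambda>v. (\<lambda>y. y) ` gen_subsheaf G u (\<lambda>v. \<alpha> v ` S v) v) z \<longleftrightarrow> ub G u (\<lambda>v. (\<lambda>y. y) ` (\<lambda>v. \<alpha> v ` S v) v) z"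
    by (rule gen_ub[OF G G id_mor[OF G] P0 Ps z])
  then show ?thesis unfolding push_def by simp
qed



lemma ub_single: "ub F u (\<lambda>w. if w = v then B else {}) x \<longleftrightarrow> (v \<le> u \<longrightarrow> (\<forall>y\<in>B. ord F v y (res F u v x)))"
  unfolding ub_def by auto
lemma ub_img_single: "ub G u (\<lambda>w. \<alpha> w ` (if w = v then B else {})) x \<longleftrightarrow> (v \<le> u \<longrightarrow> (\<forall>y\<in>B. ord G v (\<alpha> v y) (res G u v x)))"
  unfolding ub_def by auto

lemma adj_inst: "adjoint F G \<alpha> \<beta> \<Longrightarrow> x \<in> sec F u \<Longrightarrow> y \<in> sec G w \<Longrightarrow>
  pt_le G u (\<alpha> u x) w y \<longleftrightarrow> pt_le F u x w (\<beta> w y)"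
  unfolding adjoint_def by blast

lemma imp31:
  assumes cF: "complete_posheaf F" and cG: "complete_posheaf G" and mor: "is_morphism F G \<alpha>"
    and morb: "is_morphism G F \<beta>" and adj: "adjoint F G \<alpha> \<beta>" and S: "is_subsheaf F u S"
  shows "psup G u (push G \<alpha> u S) = \<alpha> u (psup F u S)"
proof -
  have F: "is_posheaf F" and G: "is_posheaf G" using cF cG by (auto intro: cp_ps)
  have Ss: "\<forall>v. v \<le> u \<longrightarrow> S v \<subseteq> sec F v" using S unfolding is_subsheaf_def by blast
  obtain z0 where z0: "z0 \<in> sec F u" "\<forall>x\<in>sec F u. ord F u z0 x \<longleftrightarrow> ub F u S x"
    using psup_exists[OF cF Ss] by blast
  have p1: "psup F u S = z0" by (rule psup_eq[OF F z0])
  have "psup G u (push G \<alpha> u S) = \<alpha> u z0"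
  proof (rule psup_eq[OF G mor_sec[OF mor z0(1)]], intro ballI)
    fix z' assume z': "z' \<in> sec G u"
    have bz: "\<beta> u z' \<in> sec F u" using mor_sec[OF morb z'] .
    have "ord G u (\<alpha> u z0) z' \<longleftrightarrow> ord F u z0 (\<beta> u z')"
    proof -
      have "pt_le G u (\<alpha> u z0) u z' \<longleftrightarrow> pt_le F u z0 u (\<beta> u z')"
        by (rule adj_inst[OF adj z0(1) z'])
      then show ?thesis unfolding pt_le_def using ps_res_id[OF F bz] ps_res_id[OF G z'] by simp
    qed
    also have "\<dots> \<longleftrightarrow> ub F u S (\<beta> u z')" using z0(2) bz by blast
    also have "\<dots> \<longleftrightarrow> ub G u (\<lambda>v. \<alpha> v ` S v) z'"
      unfolding ub_def
    proof (intro iffI allI impI ballI)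
      fix v y assume h: "\<forall>v. v \<le> u \<longrightarrow> (\<forall>y\<in>S v. ord F v y (res F u v (\<beta> u z')))" "v \<le> u" "y \<in> \<alpha> v ` S v"
      then obtain x where x: "x \<in> S v" "y = \<alpha> v x" by blast
      have "x \<in> sec F v" using x Ss h(2) by blast
      moreover have "pt_le G v (\<alpha> v x) u z' \<longleftrightarrow> pt_le F v x u (\<beta> u z')"
        by (rule adj_inst[OF adj calculation z'])
      ultimately show "ord G v y (res G u v z')" using h(1,2) x unfolding pt_le_def by simp
    next
      fix v y assume h: "\<forall>v. v \<le> u \<longrightarrow> (\<forall>y\<in>\<alpha> v ` S v. ord G v y (res G u v z'))" "v \<le> u" "y \<in> S v"
      have "y \<in> sec F v" using h Ss by blast
      moreover have "pt_le G v (\<alpha> v y) u z' \<longleftrightarrow> pt_le F v y u (\<beta> u z')"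
        by (rule adj_inst[OF adj calculation z'])
      moreover have "ord G v (\<alpha> v y) (res G u v z')" using h by blast
      ultimately show "ord F v y (res F u v (\<beta> u z'))" using h(2) unfolding pt_le_def by simp
    qed
    also have "\<dots> \<longleftrightarrow> ub G u (push G \<alpha> u S) z'" using ub_push[OF F G mor S z'] by simp
    finally show "ord G u (\<alpha> u z0) z' \<longleftrightarrow> ub G u (push G \<alpha> u S) z'" .
  qed
  then show ?thesis using p1 by simp
qed

lemma psup_gen:
  assumes F: "is_posheaf F" and G: "is_posheaf G" and mor: "is_morphism F G \<alpha>"
    and P0: "\<forall>v. \<not> v \<le> u \<longrightarrow> P v = {}" and Ps: "\<forall>v. v \<le> u \<longrightarrow> P v \<subseteq> sec F v"
    and z: "z \<in> sec F u" "\<forall>x\<in>sec F u. ord F u z x \<longleftrightarrow> ub F u P x"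
    and m: "m \<in> sec G u" "\<forall>x\<in>sec G u. ord G u m x \<longleftrightarrow> ub G u (\<lambda>v. \<alpha> v ` P v) x"
  shows "psup F u (gen_subsheaf F u P) = z" "psup G u (push G \<alpha> u (gen_subsheaf F u P)) = m"
proof -
  have S: "is_subsheaf F u (gen_subsheaf F u P)" by (rule gen_props(1)[OF F P0 Ps])
  show "psup F u (gen_subsheaf F u P) = z"
  proof (rule psup_eq[OF F z(1)], intro ballI)
    fix x assume x: "x \<in> sec F u"
    have "ub F u (\<lambda>v. (\<lambda>y. y) ` gen_subsheaf F u P v) x \<longleftrightarrow> ub F u (\<lambda>v. (\<lambda>y. y) ` P v) x"
      by (rule gen_ub[OF F F id_mor[OF F] P0 Ps x])
    then show "ord F u z x \<longleftrightarrow> ub F u (gen_subsheaf F u P) x" using z(2) x by simp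
  qed
  show "psup G u (push G \<alpha> u (gen_subsheaf F u P)) = m"
  proof (rule psup_eq[OF G m(1)], intro ballI)
    fix x assume x: "x \<in> sec G u"
    show "ord G u m x \<longleftrightarrow> ub G u (push G \<alpha> u (gen_subsheaf F u P)) x"
      using ub_push[OF F G mor S x] gen_ub[OF F G mor P0 Ps x] m(2) x by simp
  qed
qed

lemma imp12:
  assumes cF: "complete_posheaf F" and cG: "complete_posheaf G" and mor: "is_morphism F G \<alpha>"
    and c1: "\<forall>u S. is_subsheaf F u S \<longrightarrow> psup G u (push G \<alpha> u S) = \<alpha> u (psup F u S)"
  shows "(\<forall>u. \<forall>A \<subseteq> sec F u. \<forall>z. is_lub F u A z \<longrightarrow> is_lub G u (\<alpha> u ` A) (\<alpha> u z)) \<and>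
         (\<forall>u v. v \<le> u \<longrightarrow> (\<forall>y\<in>sec F v. \<alpha> u (res_ladj F v u y) = res_ladj G v u (\<alpha> v y)))"
proof (intro conjI allI impI ballI)
  have F: "is_posheaf F" and G: "is_posheaf G" using cF cG by (auto intro: cp_ps)
  {
    fix u A z assume A: "A \<subseteq> sec F u" and z: "is_lub F u A z"
    define P where "P = (\<lambda>v. if v = u then A else {})"
    have P0: "\<forall>v. \<not> v \<le> u \<longrightarrow> P v = {}" unfolding P_def by auto
    have Ps: "\<forall>v. v \<le> u \<longrightarrow> P v \<subseteq> sec F v" unfolding P_def using A by auto
    have aA: "\<alpha> u ` A \<subseteq> sec G u" using A mor_sec[OF mor] by blast
    obtain m where m: "is_lub G u (\<alpha> u ` A) m" using cp_lub[OF cG aA] by blast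
    have zs: "z \<in> sec F u" and ms: "m \<in> sec G u" using z m unfolding is_lub_def by auto
    have zc: "\<forall>x\<in>sec F u. ord F u z x \<longleftrightarrow> ub F u P x"
      unfolding P_def ub_single using lub_char[OF F z A] ps_res_id[OF F] by simp
    have mc: "\<forall>x\<in>sec G u. ord G u m x \<longleftrightarrow> ub G u (\<lambda>v. \<alpha> v ` P v) x"
      unfolding P_def ub_img_single using lub_char[OF G m aA] ps_res_id[OF G] by simp
    have "m = \<alpha> u z"
    proof -
      have "psup G u (push G \<alpha> u (gen_subsheaf F u P)) = \<alpha> u (psup F u (gen_subsheaf F u P))"
        using c1 gen_props(1)[OF F P0 Ps] by blast
      then show ?thesis using psup_gen[OF F G mor P0 Ps zs zc ms mc] by simp
    qed
    then show "is_lub G u (\<alpha> u ` A) (\<alpha> u z)" using m by simp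
  }
  {
    fix u v y assume vu: "v \<le> u" and y: "y \<in> sec F v"
    define P where "P = (\<lambda>w. if w = v then {y} else {})"
    have P0: "\<forall>w. \<not> w \<le> u \<longrightarrow> P w = {}" unfolding P_def using vu by auto
    have Ps: "\<forall>w. w \<le> u \<longrightarrow> P w \<subseteq> sec F w" unfolding P_def using y by auto
    have ay: "\<alpha> v y \<in> sec G v" using mor_sec[OF mor y] .
    note lF = ladj_char[OF cF vu y] and lG = ladj_char[OF cG vu ay]
    have zc: "\<forall>x\<in>sec F u. ord F u (res_ladj F v u y) x \<longleftrightarrow> ub F u P x"
      unfolding P_def ub_single using lF vu by simp
    have mc: "\<forall>x\<in>sec G u. ord G u (res_ladj G v u (\<alpha> v y)) x \<longleftrightarrow> ub G u (\<lambda>w. \<alpha> w ` P w) x"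
      unfolding P_def ub_img_single using lG vu by simp
    show "\<alpha> u (res_ladj F v u y) = res_ladj G v u (\<alpha> v y)"
    proof -
      have "psup G u (push G \<alpha> u (gen_subsheaf F u P)) = \<alpha> u (psup F u (gen_subsheaf F u P))"
        using c1 gen_props(1)[OF F P0 Ps] by blast
      then show ?thesis using psup_gen[OF F G mor P0 Ps conjunct1[OF lF] zc conjunct1[OF lG] mc] by simp
    qed
  }
qed



lemma op_mono:
  assumes F: "is_posheaf F" and G: "is_posheaf G" and mor: "is_morphism F G \<alpha>" and op: "order_preserving F G \<alpha>"
    and x: "x \<in> sec F u" and y: "y \<in> sec F u" and xy: "ord F u x y"
  shows "ord G u (\<alpha> u x) (\<alpha> u y)"
proof -
  have "pt_le F u x u y" unfolding pt_le_def using xy ps_res_id[OF F y] by simp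
  then have "pt_le G u (\<alpha> u x) u (\<alpha> u y)" using op[unfolded order_preserving_def, rule_format, OF x y] by blast
  then show ?thesis unfolding pt_le_def using ps_res_id[OF G mor_sec[OF mor y]] by simp
qed

lemma yoneda:
  assumes F: "is_posheaf F" and a: "a \<in> sec F u" and b: "b \<in> sec F u"
    and h: "\<And>x. x \<in> sec F u \<Longrightarrow> ord F u x a \<longleftrightarrow> ord F u x b"
  shows "a = b"
  using ps_antisym[OF F a b] h[OF a] h[OF b] ps_refl[OF F a] ps_refl[OF F b] by blast

lemma imp23:
  assumes cF: "complete_posheaf F" and cG: "complete_posheaf G" and mor: "is_morphism F G \<alpha>"
    and op: "order_preserving F G \<alpha>"
    and c2a: "\<forall>u. \<forall>A \<subseteq> sec F u. \<forall>z. is_lub F u A z \<longrightarrow> is_lub G u (\<alpha> u ` A) (\<alpha> u z)"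
    and c2b: "\<forall>u v. v \<le> u \<longrightarrow> (\<forall>y\<in>sec F v. \<alpha> u (res_ladj F v u y) = res_ladj G v u (\<alpha> v y))"
  shows "\<exists>\<beta>. is_morphism G F \<beta> \<and> order_preserving G F \<beta> \<and> adjoint F G \<alpha> \<beta>"
proof -
  have F: "is_posheaf F" and G: "is_posheaf G" using cF cG by (auto intro: cp_ps)
  define B where "B u y = {x \<in> sec F u. ord G u (\<alpha> u x) y}" for u y
  define \<beta> where "\<beta> u y = (SOME z. is_lub F u (B u y) z)" for u y
  have Bs: "B u y \<subseteq> sec F u" for u y unfolding B_def by blast
  have blub: "is_lub F u (B u y) (\<beta> u y)" for u y
    unfolding \<beta>_def by (rule someI_ex[OF cp_lub[OF cF Bs]])
  have bsec: "\<beta> u y \<in> sec F u" for u y using blub unfolding is_lub_def by blast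
  have badj: "ord G u (\<alpha> u x) y \<longleftrightarrow> ord F u x (\<beta> u y)" if y: "y \<in> sec G u" and x: "x \<in> sec F u" for u y x
  proof
    assume "ord G u (\<alpha> u x) y"
    then have "x \<in> B u y" unfolding B_def using x by blast
    then show "ord F u x (\<beta> u y)" using blub unfolding is_lub_def by blast
  next
    assume xb: "ord F u x (\<beta> u y)"
    have l: "is_lub G u (\<alpha> u ` B u y) (\<alpha> u (\<beta> u y))" using c2a[rule_format, OF Bs blub] .
    have ub: "\<forall>a\<in>\<alpha> u ` B u y. ord G u a y" unfolding B_def by blast
    have "ord G u (\<alpha> u (\<beta> u y)) y" using l[unfolded is_lub_def] y ub by blast
    moreover have "ord G u (\<alpha> u x) (\<alpha> u (\<beta> u y))" by (rule op_mono[OF F G mor op x bsec xb])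
    ultimately show "ord G u (\<alpha> u x) y"
      using ps_trans[OF G mor_sec[OF mor x] mor_sec[OF mor bsec] y] by blast
  qed
  have bnat: "\<beta> v (res G u v y) = res F u v (\<beta> u y)" if vu: "v \<le> u" and y: "y \<in> sec G u" for u v y
  proof (rule yoneda[OF F bsec ps_res_sec[OF F vu bsec]])
    fix x assume x: "x \<in> sec F v"
    have ax: "\<alpha> v x \<in> sec G v" using mor_sec[OF mor x] .
    note lF = ladj_char[OF cF vu x] and lG = ladj_char[OF cG vu ax]
    have "ord F v x (\<beta> v (res G u v y)) \<longleftrightarrow> ord G v (\<alpha> v x) (res G u v y)"
      using badj[OF ps_res_sec[OF G vu y] x] by simp
    also have "\<dots> \<longleftrightarrow> ord G u (res_ladj G v u (\<alpha> v x)) y" using lG y by blast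
    also have "\<dots> \<longleftrightarrow> ord G u (\<alpha> u (res_ladj F v u x)) y" using c2b[rule_format, OF vu x] by simp
    also have "\<dots> \<longleftrightarrow> ord F u (res_ladj F v u x) (\<beta> u y)" using badj[OF y conjunct1[OF lF]] .
    also have "\<dots> \<longleftrightarrow> ord F v x (res F u v (\<beta> u y))" using lF bsec by blast
    finally show "ord F v x (\<beta> v (res G u v y)) \<longleftrightarrow> ord F v x (res F u v (\<beta> u y))" .
  qed
  have bmono: "ord F u (\<beta> u y) (\<beta> u y')" if y: "y \<in> sec G u" and y': "y' \<in> sec G u" and yy: "ord G u y y'" for u y y'
  proof -
    have "ord G u (\<alpha> u (\<beta> u y)) y" using badj[OF y bsec] ps_refl[OF F bsec] by blast
    then have "ord G u (\<alpha> u (\<beta> u y)) y'" using ps_trans[OF G mor_sec[OF mor bsec] y y'] yy by blast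
    then show ?thesis using badj[OF y' bsec] by blast
  qed
  have m: "is_morphism G F \<beta>" unfolding is_morphism_def using bsec bnat by blast
  have o: "order_preserving G F \<beta>" unfolding order_preserving_def
  proof (intro allI impI)
    fix u w x y assume x: "x \<in> sec G u" and y: "y \<in> sec G w" and le: "pt_le G u x w y"
    then have uw: "u \<le> w" and xy: "ord G u x (res G w u y)" unfolding pt_le_def by auto
    have "ord F u (\<beta> u x) (\<beta> u (res G w u y))" by (rule bmono[OF x ps_res_sec[OF G uw y] xy])
    then show "pt_le F u (\<beta> u x) w (\<beta> w y)" unfolding pt_le_def using uw bnat[OF uw y] by simp
  qed
  have a: "adjoint F G \<alpha> \<beta>" unfolding adjoint_def
  proof (intro allI impI)
    fix u w x y assume x: "x \<in> sec F u" and y: "y \<in> sec G w"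
    show "pt_le G u (\<alpha> u x) w y \<longleftrightarrow> pt_le F u x w (\<beta> w y)"
    proof (cases "u \<le> w")
      case True
      then show ?thesis unfolding pt_le_def using bnat[OF True y] badj[OF ps_res_sec[OF G True y] x] by simp
    next
      case False then show ?thesis unfolding pt_le_def by simp
    qed
  qed
  show ?thesis using m o a by blast
qed


theorem proposition3p3:
  fixes F :: "('o::complete_lattice, 'a) posheaf"
    and G :: "('o, 'b) posheaf"
    and \<alpha> :: "'o \<Rightarrow> 'a \<Rightarrow> 'b"
  assumes "frame_law TYPE('o)"
    and "complete_posheaf F" and "complete_posheaf G"
    and "is_morphism F G \<alpha>" and "order_preserving F G \<alpha>"
  defines "cond1 \<equiv> (\<forall>u S. is_subsheaf F u S \<longrightarrow> psup G u (push G \<alpha> u S) = \<alpha> u (psup F u S))"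
    and "cond2 \<equiv> (\<forall>u. \<forall>A \<subseteq> sec F u. \<forall>z. is_lub F u A z \<longrightarrow> is_lub G u (\<alpha> u ` A) (\<alpha> u z)) \<and>
                 (\<forall>u v. v \<le> u \<longrightarrow> (\<forall>y\<in>sec F v. \<alpha> u (res_ladj F v u y) = res_ladj G v u (\<alpha> v y)))"
    and "cond3 \<equiv> (\<exists>\<beta>. is_morphism G F \<beta> \<and> order_preserving G F \<beta> \<and> adjoint F G \<alpha> \<beta>)"
  shows "(cond1 \<longleftrightarrow> cond2) \<and> (cond2 \<longleftrightarrow> cond3)"
proof -
  have 12: "cond1 \<Longrightarrow> cond2" unfolding cond1_def cond2_def by (rule imp12[OF assms(2-4)])
  have 23: "cond2 \<Longrightarrow> cond3" unfolding cond2_def cond3_def using imp23[OF assms(2-5)] by blast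
  have 31: "cond3 \<Longrightarrow> cond1" unfolding cond3_def cond1_def using imp31[OF assms(2-4)] by blast
  show ?thesis using 12 23 31 by blast
qed

end
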